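(* Let $d\geq 2$, energies $E_1\leq\dots\leq E_d$, inverse temperatures $\alpha>\beta\geq 0$, and $\gamma_k=e^{-\alpha E_k}/\sum_i e^{-\alpha E_i}$, $\Gamma_k=e^{-\beta E_k}/\sum_i e^{-\beta E_i}$. Define $$\tilde{\gamma}_1=\frac{\Gamma_1(\gamma_1-\gamma_d)}{\Gamma_1(1-\gamma_d)-\Gamma_d(1-\gamma_1)},\qquad \tilde{\Gamma}_d=\frac{\Gamma_d(\gamma_1-\gamma_d)}{\Gamma_1(1-\gamma_d)-\Gamma_d(1-\gamma_1)}.$$ For $d$-dimensional probability distributions $\mathbf{p}$ and $\mathbf{q}$ satisfying $\Gamma_d\leq p_d\leq\tilde{\Gamma}_d$ and $\gamma_1\leq q_1\leq\tilde{\gamma}_1$, there exist probability distributions $\mathbf{p}',\mathbf{p}'',\mathbf{q}',\mathbf{q}''$ such that $$\mathbf{p}\succ_{\boldsymbol{\gamma}}\mathbf{p}'\succ_{\boldsymbol{\Gamma}}\mathbf{p}'',\qquad \mathbf{q}\succ_{\boldsymbol{\Gamma}}\mathbf{q}'\succ_{\boldsymbol{\gamma}}\mathbf{q}'',$$ and $$p_d''=\frac{(1-\gamma_1)\Gamma_d}{(1-\gamma_d)\Gamma_1}p_d+\frac{(\gamma_1-\gamma_d)\Gamma_d}{(1-\gamma_d)\Gamma_1},\qquad q_1''=\frac{(1-\gamma_1)\Gamma_d}{(1-\gamma_d)\Gamma_1}q_1+\frac{\gamma_1-\gamma_d}{1-\gamma_d},$$ so that $p_d\leq p_d''\leq\tilde{\Gamma}_d$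 and $q_1\leq q_1''\leq\tilde{\gamma}_1$.
   Context: For a full-support probability vector $\mathbf{g}$, $\mathbf{p}\succ_{\mathbf{g}}\mathbf{q}$ (thermomajorisation) means: ordering indices by a permutation $\pi$ with $p_{\pi_i}/g_{\pi_i}$ non-increasing in $i$, the piecewise linear curve through the points $\left(\sum_{i\leq j}g_{\pi_i},\sum_{i\leq j}p_{\pi_i}\right)$, $j=0,\dots,d$, is nowhere below the analogous curve of $\mathbf{q}$. *)

theory Defs
  imports "HOL-Analysis.Analysis" "HOL-Combinatorics.Permutations"
begin

text \<open>Vectors in R^d are functions nat => real; only indices 1..d matter.\<close>

definition prob_vec :: "nat \<Rightarrow> (nat \<Rightarrow> real) \<Rightarrow> bool" where
  "prob_vec d p \<longleftrightarrow> (\<forall>i\<in>{1..d}. 0 \<le> p i) \<and> (\<Sum>i=1..d. p i) = 1"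

definition gibbs :: "nat \<Rightarrow> (nat \<Rightarrow> real) \<Rightarrow> real \<Rightarrow> nat \<Rightarrow> real" where
  "gibbs d E b k = exp (- b * E k) / (\<Sum>i=1..d. exp (- b * E i))"

definition cum :: "(nat \<Rightarrow> real) \<Rightarrow> (nat \<Rightarrow> nat) \<Rightarrow> nat \<Rightarrow> real" where
  "cum v \<pi> j = (\<Sum>i=1..j. v (\<pi> i))"

definition ratio_order :: "nat \<Rightarrow> (nat \<Rightarrow> real) \<Rightarrow> (nat \<Rightarrow> real) \<Rightarrow> (nat \<Rightarrow> nat) \<Rightarrow> bool" where
  "ratio_order d p g \<pi> \<longleftrightarrow> \<pi> permutes {1..d} \<and>
     (\<forall>i j. 1 \<le> i \<longrightarrow> i \<le> j \<longrightarrow> j \<le> d \<longrightarrow> p (\<pi> j) / g (\<pi> j) \<le> p (\<pi> i) / g (\<pi> i))"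

text \<open>(x,y) lies on the piecewise linear curve through the points
  (cum g pi j, cum p pi j), j = 0..d.\<close>
definition on_curve :: "nat \<Rightarrow> (nat \<Rightarrow> real) \<Rightarrow> (nat \<Rightarrow> real) \<Rightarrow> (nat \<Rightarrow> nat) \<Rightarrow> real \<Rightarrow> real \<Rightarrow> bool" where
  "on_curve d p g \<pi> x y \<longleftrightarrow> (\<exists>j\<in>{1..d}.
     cum g \<pi> (j - 1) \<le> x \<and> x \<le> cum g \<pi> j \<and>
     y = cum p \<pi> (j - 1) + (x - cum g \<pi> (j - 1)) / (cum g \<pi> j - cum g \<pi> (j - 1))
                           * (cum p \<pi> j - cum p \<pi> (j - 1)))"

text \<open>Thermomajorisation p \<succ>_g q: the curve of p is nowhere below the curve of q.\<close>
definition thermo_maj :: "nat \<Rightarrow> (nat \<Rightarrow> real) \<Rightarrow> (nat \<Rightarrow> real) \<Rightarrow> (nat \<Rightarrow> real) \<Rightarrow> bool" where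
  "thermo_maj d g p q \<longleftrightarrow> (\<exists>\<pi> \<sigma>. ratio_order d p g \<pi> \<and> ratio_order d q g \<sigma> \<and>
     (\<forall>x y z. on_curve d p g \<pi> x y \<longrightarrow> on_curve d q g \<sigma> x z \<longrightarrow> z \<le> y))"

end

theory Submission
  imports Defs
begin

definition dotp :: "nat \<Rightarrow> (nat \<Rightarrow> real) \<Rightarrow> (nat \<Rightarrow> real) \<Rightarrow> real" where
  "dotp d u v = (\<Sum>i=1..d. u i * v i)"

definition boxv :: "nat \<Rightarrow> (nat \<Rightarrow> real) \<Rightarrow> bool" where
  "boxv d t \<longleftrightarrow> (\<forall>i\<in>{1..d}. 0 \<le> t i \<and> t i \<le> 1)"

lemma cum_step: "j \<ge> 1 \<Longrightarrow> cum v \<pi> j = cum v \<pi> (j - 1) + v (\<pi> j)"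
  unfolding cum_def by (cases j) (auto simp: sum.cl_ivl_Suc)

lemma sum_pos_split:
  fixes f :: "nat \<Rightarrow> real"
  assumes "j \<in> {1..d}"
  shows "(\<Sum>k=1..d. f k * (if k < j then 1 else if k = j then th else 0))
        = (\<Sum>k=1..j-1. f k) + th * f j"
proof -
  have "(\<Sum>k=1..d. f k * (if k < j then 1 else if k = j then th else 0))
      = (\<Sum>k=1..d. (if k \<in> {k. k < j} then f k else 0) + (if k = j then th * f k else 0))"
    by (intro sum.cong) auto
  also have "\<dots> = (\<Sum>k=1..d. (if k \<in> {k. k < j} then f k else 0)) + (\<Sum>k=1..d. (if k = j then th * f k else 0))"
    by (rule sum.distrib)
  also have "(\<Sum>k=1..d. (if k \<in> {k. k < j} then f k else 0)) = (\<Sum>k\<in>{1..d} \<inter> {k. k < j}. f k)"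
    by (simp add: sum.inter_restrict)
  also have "{1..d} \<inter> {k. k < j} = {1..j-1}" using assms by auto
  also have "(\<Sum>k=1..d. (if k = j then th * f k else 0)) = th * f j" using assms by simp
  finally show ?thesis .
qed

lemma curve_point:
  fixes g :: "nat \<Rightarrow> real"
  assumes perm: "\<pi> permutes {1..d}" and gpos: "\<forall>i\<in>{1..d}. g i > 0" and j: "j \<in> {1..d}"
    and x1: "cum g \<pi> (j - 1) \<le> x" and x2: "x \<le> cum g \<pi> j"
  defines "th \<equiv> (x - cum g \<pi> (j - 1)) / (cum g \<pi> j - cum g \<pi> (j - 1))"
  defines "s \<equiv> (\<lambda>i. if inv \<pi> i < j then 1 else if inv \<pi> i = j then th else (0::real))"
  shows "boxv d s" "dotp d g s = x"
    "\<And>v. dotp d v s = cum v \<pi> (j - 1) + th * (cum v \<pi> j - cum v \<pi> (j - 1))"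
proof -
  have pj: "\<pi> j \<in> {1..d}" using perm j by (metis permutes_in_image)
  have gj: "cum g \<pi> j - cum g \<pi> (j - 1) = g (\<pi> j)" using cum_step[of j g \<pi>] j by simp
  have gjp: "g (\<pi> j) > 0" using gpos pj by auto
  have th0: "0 \<le> th" "th \<le> 1" unfolding th_def gj using x1 x2 gjp gj
    by (auto simp: divide_simps)
  show "boxv d s" unfolding boxv_def s_def using th0 by auto
  have gen: "dotp d v s = cum v \<pi> (j - 1) + th * (cum v \<pi> j - cum v \<pi> (j - 1))" for v
  proof -
    have "dotp d v s = (\<Sum>k=1..d. v (\<pi> k) * s (\<pi> k))"
      unfolding dotp_def using sum.permute[OF perm, of "\<lambda>i. v i * s i"] by simp
    also have "\<dots> = (\<Sum>k=1..d. v (\<pi> k) * (if k < j then 1 else if k = j then th else 0))"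
      unfolding s_def by (simp only: permutes_inverses(2)[OF perm])
    also have "\<dots> = (\<Sum>k=1..j-1. v (\<pi> k)) + th * v (\<pi> j)"
      by (rule sum_pos_split[OF j])
    also have "\<dots> = cum v \<pi> (j - 1) + th * (cum v \<pi> j - cum v \<pi> (j - 1))"
      using cum_step[of j v \<pi>] j by (simp add: cum_def)
    finally show ?thesis .
  qed
  then show "\<And>v. dotp d v s = cum v \<pi> (j - 1) + th * (cum v \<pi> j - cum v \<pi> (j - 1))" .
  show "dotp d g s = x" unfolding gen th_def using gj gjp by simp
qed


lemma greedy_opt:
  fixes g a t :: "nat \<Rightarrow> real"
  assumes ro: "ratio_order d a g \<pi>" and gpos: "\<forall>i\<in>{1..d}. g i > 0"
    and oc: "on_curve d a g \<pi> x y" and bt: "boxv d t" and gt: "dotp d g t = x"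
  shows "dotp d a t \<le> y"
proof -
  have perm: "\<pi> permutes {1..d}" using ro unfolding ratio_order_def by simp
  obtain j where j: "j \<in> {1..d}" and x1: "cum g \<pi> (j - 1) \<le> x" and x2: "x \<le> cum g \<pi> j"
    and y: "y = cum a \<pi> (j - 1) + (x - cum g \<pi> (j - 1)) / (cum g \<pi> j - cum g \<pi> (j - 1))
                           * (cum a \<pi> j - cum a \<pi> (j - 1))"
    using oc unfolding on_curve_def by blast
  define th where "th = (x - cum g \<pi> (j - 1)) / (cum g \<pi> j - cum g \<pi> (j - 1))"
  define s where "s = (\<lambda>i. if inv \<pi> i < j then 1 else if inv \<pi> i = j then th else (0::real))"
  note cp = curve_point[OF perm gpos j x1 x2, folded th_def, folded s_def]
  have ys: "dotp d a s = y" using cp(3)[of a] y th_def by simp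
  define r where "r = a (\<pi> j) / g (\<pi> j)"
  have key: "r * (g i * (s i - t i)) \<le> a i * (s i - t i)" if i: "i \<in> {1..d}" for i
  proof -
    define k where "k = inv \<pi> i"
    have k: "k \<in> {1..d}" unfolding k_def using perm i
      by (metis permutes_in_image permutes_inv)
    have ik: "i = \<pi> k" unfolding k_def using perm by (simp add: permutes_inverses(1))
    have gi: "g i > 0" using gpos i by auto
    have tt: "0 \<le> t i" "t i \<le> 1" using bt i unfolding boxv_def by auto
    have pj: "\<pi> j \<in> {1..d}" using perm j by (metis permutes_in_image)
    have sj: "s (\<pi> j) = th" unfolding s_def by (simp only: permutes_inverses(2)[OF perm]) simp
    have "0 \<le> s (\<pi> j) \<and> s (\<pi> j) \<le> 1" using cp(1) pj unfolding boxv_def by blast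
    then have th0: "0 \<le> th" "th \<le> 1" using sj by auto
    consider "k < j" | "k = j" | "k > j" by linarith
    then show ?thesis
    proof cases
      case 1
      have "a (\<pi> j) / g (\<pi> j) \<le> a (\<pi> k) / g (\<pi> k)"
        using ro k j 1 unfolding ratio_order_def by auto
      then have "r \<le> a i / g i" unfolding r_def ik .
      then have "r * g i \<le> a i" using gi by (simp add: divide_simps)
      moreover have "s i = 1" unfolding s_def k_def[symmetric] using 1 by simp
      moreover have "(r * g i) * (1 - t i) \<le> a i * (1 - t i)"
        using calculation(1) tt by (intro mult_right_mono) auto
      ultimately show ?thesis by (simp add: algebra_simps)
    next
      case 2
      then have "r * g i = a i" unfolding r_def ik using gi ik by simp
      then show ?thesis by (metis mult.assoc order_refl)
    next
      case 3
      have "a (\<pi> k) / g (\<pi> k) \<le> a (\<pi> j) / g (\<pi> j)"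
        using ro k j 3 unfolding ratio_order_def by auto
      then have "a i / g i \<le> r" unfolding r_def ik .
      then have "a i \<le> r * g i" using gi by (simp add: divide_simps)
      moreover have "s i = 0" unfolding s_def k_def[symmetric] using 3 by simp
      moreover have "(r * g i) * (0 - t i) \<le> a i * (0 - t i)"
        using calculation(1) tt by (intro mult_right_mono_neg) auto
      ultimately show ?thesis by (simp add: algebra_simps)
    qed
  qed
  have "r * (\<Sum>i=1..d. g i * (s i - t i)) \<le> (\<Sum>i=1..d. a i * (s i - t i))"
    unfolding sum_distrib_left by (rule sum_mono) (use key in auto)
  moreover have "(\<Sum>i=1..d. g i * (s i - t i)) = dotp d g s - dotp d g t"
    unfolding dotp_def by (simp add: algebra_simps sum_subtractf)
  moreover have "(\<Sum>i=1..d. a i * (s i - t i)) = dotp d a s - dotp d a t"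
    unfolding dotp_def by (simp add: algebra_simps sum_subtractf)
  ultimately show ?thesis using cp(2) gt ys by simp
qed

lemma thermo_crit:
  fixes g a b :: "nat \<Rightarrow> real"
  assumes gpos: "\<forall>i\<in>{1..d}. g i > 0" and ra: "ratio_order d a g \<pi>" and rb: "ratio_order d b g \<sigma>"
    and H: "\<And>t. boxv d t \<Longrightarrow> \<exists>t'. boxv d t' \<and> dotp d g t' = dotp d g t \<and> dotp d b t \<le> dotp d a t'"
  shows "thermo_maj d g a b"
  unfolding thermo_maj_def
proof (intro exI conjI allI impI)
  show "ratio_order d a g \<pi>" "ratio_order d b g \<sigma>" by fact+
  fix x y z assume oa: "on_curve d a g \<pi> x y" and ob: "on_curve d b g \<sigma> x z"
  have perm: "\<sigma> permutes {1..d}" using rb unfolding ratio_order_def by simp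
  obtain j where j: "j \<in> {1..d}" and x1: "cum g \<sigma> (j - 1) \<le> x" and x2: "x \<le> cum g \<sigma> j"
    and z: "z = cum b \<sigma> (j - 1) + (x - cum g \<sigma> (j - 1)) / (cum g \<sigma> j - cum g \<sigma> (j - 1))
                           * (cum b \<sigma> j - cum b \<sigma> (j - 1))"
    using ob unfolding on_curve_def by blast
  note cp = curve_point[OF perm gpos j x1 x2]
  obtain t' where t': "boxv d t'" "dotp d g t' = x" "z \<le> dotp d a t'"
    using H[OF cp(1)] cp(2) cp(3)[of b] z by auto
  have "dotp d a t' \<le> y" by (rule greedy_opt[OF ra gpos oa t'(1,2)])
  then show "z \<le> y" using t'(3) by simp
qed

lemma ratio_order_ex: "\<exists>\<pi>. ratio_order d a g \<pi>"
proof -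
  define key where "key = (\<lambda>i. - (a i / g i))"
  define xs where "xs = sort_key key [1..<d+1]"
  have len: "length xs = d" and st: "set xs = {1..d}" and di: "distinct xs"
    unfolding xs_def by auto
  have so: "sorted (map key xs)" unfolding xs_def by simp
  define \<pi> where "\<pi> = (\<lambda>i. if i \<in> {1..d} then xs ! (i - 1) else i)"
  have b1: "bij_betw (\<lambda>i. i - 1) {1..d} {..<d}"
    by (rule bij_betw_byWitness[where f'="\<lambda>i. i + 1"]) auto
  have b2: "bij_betw ((!) xs) {..<d} {1..d}"
    by (rule bij_betw_nth) (use di len st in auto)
  have "bij_betw ((!) xs \<circ> (\<lambda>i. i - 1)) {1..d} {1..d}"
    by (rule bij_betw_trans[OF b1 b2])
  then have "bij_betw \<pi> {1..d} {1..d}"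
    by (rule bij_betw_cong[THEN iffD1, rotated]) (auto simp: \<pi>_def)
  then have perm: "\<pi> permutes {1..d}"
    by (rule bij_imp_permutes) (auto simp: \<pi>_def)
  have "a (\<pi> j) / g (\<pi> j) \<le> a (\<pi> i) / g (\<pi> i)"
    if "1 \<le> i" "i \<le> j" "j \<le> d" for i j
  proof -
    have "map key xs ! (i - 1) \<le> map key xs ! (j - 1)"
      by (rule sorted_nth_mono[OF so]) (use that len in auto)
    then have "key (xs ! (i - 1)) \<le> key (xs ! (j - 1))" using that len by simp
    then show ?thesis using that unfolding key_def \<pi>_def by auto
  qed
  then show ?thesis using perm unfolding ratio_order_def by blast
qed


lemma sum_first: "(d::nat) \<ge> 1 \<Longrightarrow> (\<Sum>i=1..d. f i) = f 1 + (\<Sum>i=2..d. f i)"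
  by (simp add: sum.atLeast_Suc_atMost numeral_2_eq_2)

lemma sum_last_gen: "1 \<le> m \<Longrightarrow> (m::nat) \<le> d \<Longrightarrow> (\<Sum>i=m..d. f i) = (\<Sum>i=m..d-1. f i) + f d"
proof -
  assume "1 \<le> m" "m \<le> d"
  show ?thesis
  proof (cases d)
    case 0 then show ?thesis using \<open>1 \<le> m\<close> \<open>m \<le> d\<close> by simp
  next
    case (Suc k) then show ?thesis using \<open>m \<le> d\<close> by (simp add: sum.cl_ivl_Suc)
  qed
qed

lemma sum_last: "(d::nat) \<ge> 1 \<Longrightarrow> (\<Sum>i=1..d. f i) = (\<Sum>i=1..d-1. f i) + f d"
  by (rule sum_last_gen) auto

lemma sum_1d: "(d::nat) \<ge> 2 \<Longrightarrow> (\<Sum>i=1..d. f i) = f 1 + f d + (\<Sum>i=2..d-1. f i)"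
  using sum_first[of d f] sum_last_gen[of 2 d f] by (simp add: algebra_simps)

lemma swap_map:
  fixes g a :: "nat \<Rightarrow> real"
  assumes d: "d \<ge> 2" and gpos: "\<forall>i\<in>{1..d}. g i > 0" and gle: "g d \<le> g 1"
  defines "r \<equiv> g d / g 1"
  defines "b \<equiv> a(1 := (1 - r) * a 1 + a d, d := r * a 1)"
  shows "prob_vec d a \<Longrightarrow> prob_vec d b" "thermo_maj d g a b"
proof -
  have g1: "g 1 > 0" "g d > 0" using gpos d by auto
  have r: "0 \<le> r" "r \<le> 1" unfolding r_def using g1 gle by (auto simp: divide_simps)
  have d1: "d \<noteq> 1" using d by simp
  have bo: "b i = a i" if "i \<in> {2..d-1}" for i using that d unfolding b_def by auto
  have b1: "b 1 = (1 - r) * a 1 + a d" and bd: "b d = r * a 1" unfolding b_def using d1 by auto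
  show "prob_vec d b" if pa: "prob_vec d a"
  proof -
    have nn: "\<forall>i\<in>{1..d}. 0 \<le> a i" and s: "(\<Sum>i=1..d. a i) = 1" using pa unfolding prob_vec_def by auto
    have "a 1 \<ge> 0" "a d \<ge> 0" using nn d by auto
    then have "0 \<le> b 1" "0 \<le> b d" unfolding b1 bd using r by auto
    then have "\<forall>i\<in>{1..d}. 0 \<le> b i" using nn bo
      by (metis atLeastAtMost_iff b_def fun_upd_other)
    moreover have "(\<Sum>i=2..d-1. b i) = (\<Sum>i=2..d-1. a i)" by (rule sum.cong) (auto simp: bo)
    moreover have "(\<Sum>i=1..d. b i) = 1"
      using sum_1d[OF d, of b] sum_1d[OF d, of a] s b1 bd calculation(2)
      by (simp add: algebra_simps)
    ultimately show ?thesis unfolding prob_vec_def by simp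
  qed
  obtain \<pi> \<sigma> where ro: "ratio_order d a g \<pi>" "ratio_order d b g \<sigma>" using ratio_order_ex by metis
  show "thermo_maj d g a b"
  proof (rule thermo_crit[OF gpos ro])
    fix t assume bt: "boxv d t"
    define t' where "t' = t(1 := r * t d + (1 - r) * t 1, d := t 1)"
    have to: "t' i = t i" if "i \<in> {2..d-1}" for i using that d unfolding t'_def by auto
    have t1: "t' 1 = r * t d + (1 - r) * t 1" and td: "t' d = t 1" unfolding t'_def using d1 by auto
    have tt: "0 \<le> t 1" "t 1 \<le> 1" "0 \<le> t d" "t d \<le> 1" using bt d unfolding boxv_def by auto
    have "0 \<le> t' 1" "t' 1 \<le> 1"
      unfolding t1 using tt r by (auto intro!: convex_bound_le add_nonneg_nonneg)
    then have "boxv d t'" using bt td tt unfolding boxv_def t'_def by auto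
    moreover have "dotp d g t' = dotp d g t"
    proof -
      have "(\<Sum>i=2..d-1. g i * t' i) = (\<Sum>i=2..d-1. g i * t i)" by (rule sum.cong) (auto simp: to)
      then have "dotp d g t' = g 1 * t' 1 + g d * t' d + (\<Sum>i=2..d-1. g i * t i)"
        unfolding dotp_def using sum_1d[OF d, of "\<lambda>i. g i * t' i"] by simp
      moreover have "dotp d g t = g 1 * t 1 + g d * t d + (\<Sum>i=2..d-1. g i * t i)"
        unfolding dotp_def using sum_1d[OF d, of "\<lambda>i. g i * t i"] by simp
      moreover have "g 1 * t' 1 + g d * t' d = g 1 * t 1 + g d * t d"
        unfolding t1 td r_def using g1 by (simp add: field_simps)
      ultimately show ?thesis by simp
    qed
    moreover have "dotp d b t = dotp d a t'"
    proof -
      have "(\<Sum>i=2..d-1. a i * t' i) = (\<Sum>i=2..d-1. a i * t i)" by (rule sum.cong) (auto simp: to)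
      then have "dotp d a t' = a 1 * t' 1 + a d * t' d + (\<Sum>i=2..d-1. a i * t i)"
        unfolding dotp_def using sum_1d[OF d, of "\<lambda>i. a i * t' i"] by simp
      moreover have "(\<Sum>i=2..d-1. b i * t i) = (\<Sum>i=2..d-1. a i * t i)" by (rule sum.cong) (auto simp: bo)
      moreover have "dotp d b t = b 1 * t 1 + b d * t d + (\<Sum>i=2..d-1. a i * t i)"
        unfolding dotp_def using sum_1d[OF d, of "\<lambda>i. b i * t i"] calculation(2) by simp
      moreover have "a 1 * t' 1 + a d * t' d = b 1 * t 1 + b d * t d"
        unfolding t1 td b1 bd by (simp add: algebra_simps)
      ultimately show ?thesis by simp
    qed
    ultimately show "\<exists>t'. boxv d t' \<and> dotp d g t' = dotp d g t \<and> dotp d b t \<le> dotp d a t'"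
      by auto
  qed
qed


lemma t1_map:
  fixes g a :: "nat \<Rightarrow> real"
  assumes d: "d \<ge> 2" and gpos: "\<forall>i\<in>{1..d}. g i > 0" and gle: "g d \<le> g 1"
    and pg: "prob_vec d g" and pa: "prob_vec d a"
  defines "c \<equiv> 1 - (1 - g 1) / (1 - g d)"
  defines "b \<equiv> (\<lambda>i. if i = 1 then a d + c * (1 - a d) else (1 - c) * (1 - a d) * g i / (1 - g 1))"
  shows "prob_vec d b" "thermo_maj d g a b"
proof -
  have g1: "g 1 > 0" "g d > 0" using gpos d by auto
  have sg: "(\<Sum>i=1..d. g i) = 1" using pg unfolding prob_vec_def by simp
  have "g 1 + g d \<le> 1"
  proof -
    have "(\<Sum>i=2..d-1. g i) \<ge> 0" using gpos by (intro sum_nonneg) (auto intro: less_imp_le)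
    then show ?thesis using sum_1d[OF d, of g] sg by simp
  qed
  then have g1l: "g 1 < 1" "g d < 1" using g1 by auto
  have sg2: "(\<Sum>i=2..d. g i) = 1 - g 1" using sum_first[of d g] sg d by simp
  have sgl: "(\<Sum>i=1..d-1. g i) = 1 - g d" using sum_last[of d g] sg d by simp
  have c: "0 \<le> c" "c \<le> 1" unfolding c_def using g1l gle g1 by (auto simp: divide_simps)
  have c1: "(1 - g d) * c = g 1 - g d" "(1 - g d) * (1 - c) = 1 - g 1"
    unfolding c_def using g1l by (auto simp: field_simps)
  have nn: "\<forall>i\<in>{1..d}. 0 \<le> a i" and sa: "(\<Sum>i=1..d. a i) = 1" using pa unfolding prob_vec_def by auto
  have sal: "(\<Sum>i=1..d-1. a i) = 1 - a d" using sum_last[of d a] sa d by simp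
  have ad: "0 \<le> a d" "a d \<le> 1"
  proof -
    show "0 \<le> a d" using nn d by auto
    have "(\<Sum>i=1..d-1. a i) \<ge> 0" using nn by (intro sum_nonneg) auto
    then show "a d \<le> 1" using sal by simp
  qed
  show "prob_vec d b"
  proof -
    have "0 \<le> b i" if "i \<in> {1..d}" for i
      using ad c g1l less_imp_le[OF gpos[rule_format, OF that]] unfolding b_def by (auto intro!: mult_nonneg_nonneg divide_nonneg_pos)
    moreover have "(\<Sum>i=1..d. b i) = 1"
    proof -
      have "(\<Sum>i=2..d. b i) = (\<Sum>i=2..d. (1 - c) * (1 - a d) / (1 - g 1) * g i)"
        by (rule sum.cong) (auto simp: b_def)
      also have "\<dots> = (1 - c) * (1 - a d)" unfolding sum_distrib_left[symmetric] sg2 using g1l by simp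
      finally show ?thesis using sum_first[of d b] d unfolding b_def by (simp add: algebra_simps)
    qed
    ultimately show ?thesis unfolding prob_vec_def by simp
  qed
  obtain \<pi> \<sigma> where ro: "ratio_order d a g \<pi>" "ratio_order d b g \<sigma>" using ratio_order_ex by metis
  show "thermo_maj d g a b"
  proof (rule thermo_crit[OF gpos ro])
    fix t assume bt: "boxv d t"
    define m where "m = (\<Sum>i=2..d. g i * t i) / (1 - g 1)"
    define t' where "t' = (\<lambda>i. if i = d then t 1 else c * t 1 + (1 - c) * m)"
    have tt: "0 \<le> t 1" "t 1 \<le> 1" using bt d unfolding boxv_def by auto
    have m: "0 \<le> m" "m \<le> 1"
    proof -
      have gnn: "\<forall>i\<in>{1..d}. 0 \<le> g i" using gpos by (auto simp: order_less_imp_le)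
      have "0 \<le> (\<Sum>i=2..d. g i * t i)" using bt gnn unfolding boxv_def
        by (intro sum_nonneg) (auto intro!: mult_nonneg_nonneg)
      moreover have "(\<Sum>i=2..d. g i * t i) \<le> (\<Sum>i=2..d. g i)" using bt gnn unfolding boxv_def
        by (intro sum_mono) (auto intro!: mult_left_le)
      ultimately show "0 \<le> m" "m \<le> 1" unfolding m_def sg2 using g1l by (auto simp: divide_simps)
    qed
    have "0 \<le> c * t 1 + (1 - c) * m" "c * t 1 + (1 - c) * m \<le> 1"
      using c tt m by (auto intro!: convex_bound_le)
    then have "boxv d t'" using tt unfolding boxv_def t'_def by auto
    moreover have "dotp d g t' = dotp d g t"
    proof -
      have "(\<Sum>i=1..d-1. g i * t' i) = (\<Sum>i=1..d-1. g i * (c * t 1 + (1 - c) * m))"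
        by (rule sum.cong) (use d in \<open>auto simp: t'_def\<close>)
      also have "\<dots> = (1 - g d) * (c * t 1 + (1 - c) * m)" unfolding sum_distrib_right[symmetric] sgl ..
      finally have "dotp d g t' = (1 - g d) * (c * t 1 + (1 - c) * m) + g d * t 1"
        unfolding dotp_def using sum_last[of d "\<lambda>i. g i * t' i"] d by (simp add: t'_def)
      also have "\<dots> = ((1 - g d) * c) * t 1 + ((1 - g d) * (1 - c)) * m + g d * t 1"
        by (simp add: algebra_simps)
      also have "\<dots> = g 1 * t 1 + (1 - g 1) * m" unfolding c1 by (simp add: algebra_simps)
      also have "\<dots> = dotp d g t"
        unfolding dotp_def m_def using sum_first[of d "\<lambda>i. g i * t i"] d g1l by simp
      finally show ?thesis .
    qed
    moreover have "dotp d b t = dotp d a t'"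
    proof -
      have "(\<Sum>i=1..d-1. a i * t' i) = (\<Sum>i=1..d-1. a i * (c * t 1 + (1 - c) * m))"
        by (rule sum.cong) (use d in \<open>auto simp: t'_def\<close>)
      also have "\<dots> = (1 - a d) * (c * t 1 + (1 - c) * m)" unfolding sum_distrib_right[symmetric] sal ..
      finally have A: "dotp d a t' = (1 - a d) * (c * t 1 + (1 - c) * m) + a d * t 1"
        unfolding dotp_def using sum_last[of d "\<lambda>i. a i * t' i"] d by (simp add: t'_def)
      have "(\<Sum>i=2..d. b i * t i) = (\<Sum>i=2..d. (1 - c) * (1 - a d) / (1 - g 1) * (g i * t i))"
        by (rule sum.cong) (auto simp: b_def)
      also have "\<dots> = (1 - c) * (1 - a d) * m" unfolding sum_distrib_left[symmetric] m_def by simp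
      finally have "dotp d b t = (a d + c * (1 - a d)) * t 1 + (1 - c) * (1 - a d) * m"
        unfolding dotp_def using sum_first[of d "\<lambda>i. b i * t i"] d by (simp add: b_def)
      then show ?thesis using A by (simp add: algebra_simps)
    qed
    ultimately show "\<exists>t'. boxv d t' \<and> dotp d g t' = dotp d g t \<and> dotp d b t \<le> dotp d a t'"
      by auto
  qed
qed


lemma alg_p:
  fixes g1 gd G1 Gd p :: real
  assumes "0 < gd" "gd \<le> g1" "g1 < 1" "0 < Gd" "Gd \<le> G1"
    and D: "0 < G1 * (1 - gd) - Gd * (1 - g1)"
    and "Gd \<le> p" "p \<le> Gd * (g1 - gd) / (G1 * (1 - gd) - Gd * (1 - g1))"
  defines "c \<equiv> 1 - (1 - g1) / (1 - gd)"
  shows "Gd / G1 * (p + c * (1 - p)) = (1 - g1) * Gd / ((1 - gd) * G1) * p + (g1 - gd) * Gd / ((1 - gd) * G1)"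
    "p \<le> Gd / G1 * (p + c * (1 - p))"
    "Gd / G1 * (p + c * (1 - p)) \<le> Gd * (g1 - gd) / (G1 * (1 - gd) - Gd * (1 - g1))"
proof -
  have h: "1 - gd > 0" "G1 > 0" "1 - gd \<noteq> 0" "G1 \<noteq> 0" "gd \<noteq> 1" using assms by auto
  have pc: "p + c * (1 - p) = ((1 - g1) * p + (g1 - gd)) / (1 - gd)"
    unfolding c_def using h(3) by (simp add: field_simps)
  have e: "Gd / G1 * (p + c * (1 - p)) = (Gd * ((1 - g1) * p + (g1 - gd))) / (G1 * (1 - gd))"
    unfolding pc by simp
  show "Gd / G1 * (p + c * (1 - p)) = (1 - g1) * Gd / ((1 - gd) * G1) * p + (g1 - gd) * Gd / ((1 - gd) * G1)"
    unfolding e by (simp add: add_divide_distrib[symmetric] algebra_simps)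
  have p1: "p * (G1 * (1 - gd) - Gd * (1 - g1)) \<le> Gd * (g1 - gd)"
    using assms(8) D by (simp add: field_simps)
  show "p \<le> Gd / G1 * (p + c * (1 - p))"
    unfolding e using h p1 by (simp add: field_simps)
  have a0: "(1 - g1) * Gd \<ge> 0" using assms by simp
  have "(Gd * ((1 - g1) * p + (g1 - gd))) * (G1 * (1 - gd) - Gd * (1 - g1)) \<le> Gd * (g1 - gd) * (G1 * (1 - gd))"
  proof -
    have "Gd * (1 - g1) * (p * (G1 * (1 - gd) - Gd * (1 - g1))) \<le> Gd * (1 - g1) * (Gd * (g1 - gd))"
      by (rule mult_left_mono[OF p1]) (use a0 in \<open>simp add: mult.commute\<close>)
    then show ?thesis by (simp add: algebra_simps)
  qed
  then show "Gd / G1 * (p + c * (1 - p)) \<le> Gd * (g1 - gd) / (G1 * (1 - gd) - Gd * (1 - g1))"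
    unfolding e using h D by (simp add: divide_simps)
qed


lemma alg_q:
  fixes g1 gd G1 Gd q :: real
  assumes "0 < gd" "gd \<le> g1" "g1 < 1" "0 < Gd" "Gd \<le> G1"
    and D: "0 < G1 * (1 - gd) - Gd * (1 - g1)"
    and "g1 \<le> q" "q \<le> G1 * (g1 - gd) / (G1 * (1 - gd) - Gd * (1 - g1))"
  defines "c \<equiv> 1 - (1 - g1) / (1 - gd)"
  defines "y \<equiv> Gd / G1 * q"
  shows "y + c * (1 - y) = (1 - g1) * Gd / ((1 - gd) * G1) * q + (g1 - gd) / (1 - gd)"
    "q \<le> y + c * (1 - y)"
    "y + c * (1 - y) \<le> G1 * (g1 - gd) / (G1 * (1 - gd) - Gd * (1 - g1))"
proof -
  have h: "1 - gd > 0" "G1 > 0" "1 - gd \<noteq> 0" "G1 \<noteq> 0" "gd \<noteq> 1" using assms by auto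
  have pc: "y + c * (1 - y) = ((1 - g1) * y + (g1 - gd)) / (1 - gd)"
    unfolding c_def using h(3) by (simp add: field_simps)
  have e: "y + c * (1 - y) = ((1 - g1) * Gd * q + G1 * (g1 - gd)) / (G1 * (1 - gd))"
    unfolding pc unfolding y_def using h by (simp add: field_simps)
  show "y + c * (1 - y) = (1 - g1) * Gd / ((1 - gd) * G1) * q + (g1 - gd) / (1 - gd)"
  proof -
    have "(g1 - gd) / (1 - gd) = G1 * (g1 - gd) / (G1 * (1 - gd))" using h by simp
    then show ?thesis unfolding e by (simp add: add_divide_distrib[symmetric] algebra_simps)
  qed
  have q1: "q * (G1 * (1 - gd) - Gd * (1 - g1)) \<le> G1 * (g1 - gd)"
    using assms(8) D by (simp add: field_simps)
  show "q \<le> y + c * (1 - y)"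
    unfolding e using h q1 by (simp add: field_simps)
  have a0: "(1 - g1) * Gd \<ge> 0" using assms by simp
  have "((1 - g1) * Gd * q + G1 * (g1 - gd)) * (G1 * (1 - gd) - Gd * (1 - g1)) \<le> G1 * (g1 - gd) * (G1 * (1 - gd))"
  proof -
    have "(1 - g1) * Gd * (q * (G1 * (1 - gd) - Gd * (1 - g1))) \<le> (1 - g1) * Gd * (G1 * (g1 - gd))"
      by (rule mult_left_mono[OF q1 a0])
    then show ?thesis by (simp add: algebra_simps)
  qed
  then show "y + c * (1 - y) \<le> G1 * (g1 - gd) / (G1 * (1 - gd) - Gd * (1 - g1))"
    unfolding e using h D by (simp add: divide_simps)
qed


lemma gibbs_facts:
  assumes d: "d \<ge> 2" and b: "b \<ge> 0" and mono: "\<forall>i j. 1 \<le> i \<longrightarrow> i \<le> j \<longrightarrow> j \<le> d \<longrightarrow> E i \<le> E j"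
  shows "\<forall>i\<in>{1..d}. gibbs d E b i > 0" "prob_vec d (gibbs d E b)" "gibbs d E b d \<le> gibbs d E b 1"
proof -
  define Z where "Z = (\<Sum>i=1..d. exp (- b * E i))"
  have Z: "Z > 0" unfolding Z_def using d by (intro sum_pos) auto
  show pos: "\<forall>i\<in>{1..d}. gibbs d E b i > 0" unfolding gibbs_def Z_def[symmetric] using Z by auto
  have "(\<Sum>i=1..d. gibbs d E b i) = 1" unfolding gibbs_def Z_def[symmetric]
    unfolding sum_divide_distrib[symmetric] Z_def using Z Z_def by simp
  then show "prob_vec d (gibbs d E b)" using pos unfolding prob_vec_def by (auto simp: less_imp_le)
  have "E 1 \<le> E d" using mono d by auto
  then have "- b * E d \<le> - b * E 1" using b by (simp add: mult_left_mono)
  then show "gibbs d E b d \<le> gibbs d E b 1" unfolding gibbs_def Z_def[symmetric] using Z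
    by (simp add: divide_right_mono)
qed

theorem lemma3:
  fixes d :: nat and E :: "nat \<Rightarrow> real" and \<alpha> \<beta> :: real and p q :: "nat \<Rightarrow> real"
  assumes "d \<ge> 2"
    and "\<forall>i j. 1 \<le> i \<longrightarrow> i \<le> j \<longrightarrow> j \<le> d \<longrightarrow> E i \<le> E j"
    and "\<alpha> > \<beta>" and "\<beta> \<ge> 0"
    and "prob_vec d p" and "prob_vec d q"
    and "gibbs d E \<beta> d \<le> p d"
    and "p d \<le> gibbs d E \<beta> d * (gibbs d E \<alpha> 1 - gibbs d E \<alpha> d) /
           (gibbs d E \<beta> 1 * (1 - gibbs d E \<alpha> d) - gibbs d E \<beta> d * (1 - gibbs d E \<alpha> 1))"
    and "gibbs d E \<alpha> 1 \<le> q 1"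
    and "q 1 \<le> gibbs d E \<beta> 1 * (gibbs d E \<alpha> 1 - gibbs d E \<alpha> d) /
           (gibbs d E \<beta> 1 * (1 - gibbs d E \<alpha> d) - gibbs d E \<beta> d * (1 - gibbs d E \<alpha> 1))"
  shows "\<exists>p' p'' q' q''. prob_vec d p' \<and> prob_vec d p'' \<and> prob_vec d q' \<and> prob_vec d q'' \<and>
     thermo_maj d (gibbs d E \<alpha>) p p' \<and> thermo_maj d (gibbs d E \<beta>) p' p'' \<and>
     thermo_maj d (gibbs d E \<beta>) q q' \<and> thermo_maj d (gibbs d E \<alpha>) q' q'' \<and>
     p'' d = (1 - gibbs d E \<alpha> 1) * gibbs d E \<beta> d / ((1 - gibbs d E \<alpha> d) * gibbs d E \<beta> 1) * p d
             + (gibbs d E \<alpha> 1 - gibbs d E \<alpha> d) * gibbs d E \<beta> d / ((1 - gibbs d E \<alpha> d) * gibbs d E \<beta> 1) \<and>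
     q'' 1 = (1 - gibbs d E \<alpha> 1) * gibbs d E \<beta> d / ((1 - gibbs d E \<alpha> d) * gibbs d E \<beta> 1) * q 1
             + (gibbs d E \<alpha> 1 - gibbs d E \<alpha> d) / (1 - gibbs d E \<alpha> d) \<and>
     p d \<le> p'' d \<and>
     p'' d \<le> gibbs d E \<beta> d * (gibbs d E \<alpha> 1 - gibbs d E \<alpha> d) /
           (gibbs d E \<beta> 1 * (1 - gibbs d E \<alpha> d) - gibbs d E \<beta> d * (1 - gibbs d E \<alpha> 1)) \<and>
     q 1 \<le> q'' 1 \<and>
     q'' 1 \<le> gibbs d E \<beta> 1 * (gibbs d E \<alpha> 1 - gibbs d E \<alpha> d) /
           (gibbs d E \<beta> 1 * (1 - gibbs d E \<alpha> d) - gibbs d E \<beta> d * (1 - gibbs d E \<alpha> 1))"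
proof -
  note d = assms(1)
  define g where "g = gibbs d E \<alpha>"
  define G where "G = gibbs d E \<beta>"
  have a0: "\<alpha> \<ge> 0" using assms(3,4) by simp
  note gf = gibbs_facts[OF d a0 assms(2), folded g_def]
  note Gf = gibbs_facts[OF d assms(4) assms(2), folded G_def]
  have g1: "0 < g d" "g d \<le> g 1" "0 < G d" "G d \<le> G 1" "0 < g 1" "0 < G 1" using gf Gf d by auto
  have "g 1 + g d \<le> 1"
  proof -
    have "(\<Sum>i=2..d-1. g i) \<ge> 0" using gf(1) by (intro sum_nonneg) (auto intro: less_imp_le)
    then show ?thesis using sum_1d[OF d, of g] gf(2) unfolding prob_vec_def by simp
  qed
  then have g1l: "g 1 < 1" using g1 by simp
  define D where "D = G 1 * (1 - g d) - G d * (1 - g 1)"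
  have Dp: "0 < D"
  proof (rule ccontr)
    assume "\<not> 0 < D"
    then have "G d * (g 1 - g d) / D \<le> 0" using g1 by (intro divide_nonneg_nonpos) auto
    then show False using assms(7,8) g1 unfolding G_def[symmetric] g_def[symmetric] D_def by simp
  qed
  define c where "c = 1 - (1 - g 1) / (1 - g d)"
  define p' where "p' = (\<lambda>i. if i = 1 then p d + c * (1 - p d) else (1 - c) * (1 - p d) * g i / (1 - g 1))"
  define p'' where "p'' = p'(1 := (1 - G d / G 1) * p' 1 + p' d, d := G d / G 1 * p' 1)"
  define q' where "q' = q(1 := (1 - G d / G 1) * q 1 + q d, d := G d / G 1 * q 1)"
  define q'' where "q'' = (\<lambda>i. if i = 1 then q' d + c * (1 - q' d) else (1 - c) * (1 - q' d) * g i / (1 - g 1))"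
  note T1p = t1_map[OF d gf(1) g1(2) gf(2) assms(5), folded c_def, folded p'_def]
  note SWp = swap_map[OF d Gf(1) g1(4), of p', folded p''_def]
  note SWq = swap_map[OF d Gf(1) g1(4), of q, folded q'_def]
  note T1q = t1_map[OF d gf(1) g1(2) gf(2) SWq(1)[OF assms(6)], folded c_def, folded q''_def]
  have ep: "p'' d = G d / G 1 * (p d + c * (1 - p d))" unfolding p''_def p'_def by simp
  have d1: "d \<noteq> 1" using d by simp
  have eq: "q'' 1 = G d / G 1 * q 1 + c * (1 - G d / G 1 * q 1)" unfolding q''_def q'_def using d1 by simp
  note AP = alg_p[OF g1(1,2) g1l g1(3,4) Dp[unfolded D_def] assms(7,8)[folded G_def g_def], folded c_def]
  note AQ = alg_q[OF g1(1,2) g1l g1(3,4) Dp[unfolded D_def] assms(9,10)[folded G_def g_def], folded c_def]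
  show ?thesis unfolding g_def[symmetric] G_def[symmetric]
    apply (rule exI[of _ p'], rule exI[of _ p''], rule exI[of _ q'], rule exI[of _ q''])
    using T1p SWp(1)[OF T1p(1)] SWp(2) SWq(1)[OF assms(6)] SWq(2) T1q ep eq AP AQ by simp
qed


end
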